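(* Let $G=(V,E,w)$ be a finite unweighted symmetric graph, i.e. $V$ is a finite set, $w:V\times V\to\{0,1\}$ with $w(i,j)=w(j,i)$, $E=\{(i,j): w(i,j)\neq 0\}$, and $N(i)=\{j\in V: (i,j)\in E\}$. Let $V_0\subseteq V$ be a set of boundary nodes, and let the potential function be constant, $\rho(i)=1$ for all $i\in V$. Suppose $f:V\to\mathbb{R}$ satisfies the generalized geodesic distance equation with the supremum norm ($p=\infty$): $$\rho(i)\,\|(\nabla^-_w f)(i)\|_\infty = 1 \quad \text{for } i\in V\setminus V_0,\qquad f(i)=0 \quad \text{for } i\in V_0.$$ Then $f$ satisfies the shortest-path (Dijkstra) distance equation $$f(i)=\min_{j\in N(i)}\{f(j)+1\}\quad \text{for } i\in V\setminus V_0,\qquad f(i)=0\quad\text{for } i\in V_0.$$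
   Context: For $a\in\mathbb{R}$, $(a)_+=\max\{a,0\}$ and $(a)_-=-\min\{a,0\}$. The negative directional graph difference operator is $(d^-_w f)(i,j)=\sqrt{w(i,j)}\,(f(j)-f(i))_-$ for $i,j\in V$, and the negative graph gradient at $i$ is the vector $(\nabla^-_w f)(i)=[(d^-_w f)(i,j): j\in V]^T$. Its supremum norm is $\|(\nabla^-_w f)(i)\|_\infty=\max_{j\in V}|(d^-_w f)(i,j)|$. *)

theory Defs
  imports Complex_Main
begin

definition neg_part :: "real \<Rightarrow> real" where
  "neg_part a = - min a 0"

definition dneg :: "('a \<Rightarrow> 'a \<Rightarrow> real) \<Rightarrow> ('a \<Rightarrow> real) \<Rightarrow> 'a \<Rightarrow> 'a \<Rightarrow> real" where
  "dneg w f i j = sqrt (w i j) * neg_part (f j - f i)"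

definition grad_neg_sup :: "'a set \<Rightarrow> ('a \<Rightarrow> 'a \<Rightarrow> real) \<Rightarrow> ('a \<Rightarrow> real) \<Rightarrow> 'a \<Rightarrow> real" where
  "grad_neg_sup V w f i = Max ((\<lambda>j. \<bar>dneg w f i j\<bar>) ` V)"

definition nbhd :: "'a set \<Rightarrow> ('a \<Rightarrow> 'a \<Rightarrow> real) \<Rightarrow> 'a \<Rightarrow> 'a set" where
  "nbhd V w i = {j \<in> V. w i j \<noteq> 0}"

end

theory Submission
  imports Defs
begin

theorem proposition1:
  fixes V V0 :: "'a set" and w :: "'a \<Rightarrow> 'a \<Rightarrow> real"
    and rho f :: "'a \<Rightarrow> real"
  assumes "finite V"
    and "\<forall>i\<in>V. \<forall>j\<in>V. w i j \<in> {0, 1}"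
    and "\<forall>i\<in>V. \<forall>j\<in>V. w i j = w j i"
    and "V0 \<subseteq> V"
    and "\<forall>i\<in>V. rho i = 1"
    and "\<forall>i\<in>V - V0. rho i * grad_neg_sup V w f i = 1"
    and "\<forall>i\<in>V0. f i = 0"
  shows "(\<forall>i\<in>V - V0. f i = Min ((\<lambda>j. f j + 1) ` nbhd V w i))
         \<and> (\<forall>i\<in>V0. f i = 0)"
proof -
  have "f i = Min ((\<lambda>j. f j + 1) ` nbhd V w i)" if iV: "i \<in> V - V0" for i
  proof -
    let ?S = "(\<lambda>j. \<bar>dneg w f i j\<bar>) ` V"
    have M: "Max ?S = 1" using assms(5,6) iV unfolding grad_neg_sup_def by auto
    have fin: "finite ?S" using assms(1) by simp
    have ne: "?S \<noteq> {}" using iV by auto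
    have "1 \<in> ?S" using Max_in[OF fin ne] M by simp
    then obtain j where jV: "j \<in> V" and dj: "\<bar>dneg w f i j\<bar> = 1" by auto
    have wij: "w i j \<in> {0,1}" using assms(2) iV jV by auto
    have w1: "w i j = 1" and fj: "f j + 1 = f i"
      using wij dj unfolding dneg_def neg_part_def by (auto split: if_splits simp: min_def)
    have jN: "j \<in> nbhd V w i" using jV w1 unfolding nbhd_def by auto
    have le: "f i \<le> f k + 1" if kN: "k \<in> nbhd V w i" for k
    proof -
      have kV: "k \<in> V" and wk: "w i k \<noteq> 0" using kN unfolding nbhd_def by auto
      have "w i k = 1" using assms(2) iV kV wk by auto
      moreover have "\<bar>dneg w f i k\<bar> \<le> Max ?S" using fin kV by (intro Max_ge) auto
      ultimately show ?thesis using M unfolding dneg_def neg_part_def by (auto simp: min_def split: if_splits)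
    qed
    have finN: "finite (nbhd V w i)" using assms(1) unfolding nbhd_def by auto
    show ?thesis
      by (rule Min_eqI[symmetric]) (use finN jN fj le in \<open>auto intro!: image_eqI[where x=j]\<close>)
  qed
  then show ?thesis using assms(7) by blast
qed

end
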